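(* Let $G=(S,C,\emptyset)$ be a spider graph with weight $r$ and empty head. If $G$ is thin ($r\ge2$), then $\tilde\gamma_{gr}^{\times2}(G)=2r$ and $(c_1,\dots,c_r,s_1,\dots,s_r)$ is an MDNS of $G$. If $G$ is thick ($r\ge3$), then $\tilde\gamma_{gr}^{\times2}(G)=r+2$ and $(s_1,\dots,s_r,c_1,c_2)$ is an MDNS of $G$.
   Context: Graphs are finite, simple, undirected; $N[v]$ closed neighborhood. A sequence of distinct vertices $(v_1,\dots,v_k)$ is a double neighborhood sequence (DNS) if for each $i$ some $w\in N[v_i]$ satisfies $|\{j<i:w\in N[v_j]\}|\le1$; an MDNS is a DNS of maximum length and $\tilde\gamma_{gr}^{\times2}$ is that length. A spider graph $(S,C,\emptyset)$ with weight $r$ has vertex set $S\cup C$ with $S=\{s_1,\dots,s_r\}$ stable and $C=\{c_1,\dots,c_r\}$ a clique; thin: $s_ic_j\in E$ iff $i=j$; thick: $s_ic_j\in E$ iff $i\neq j$. *)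

theory Defs
  imports Main
begin

text \<open>A finite simple graph is given by a vertex set V and a symmetric irreflexive
adjacency relation E (only its restriction to V matters).\<close>

definition closed_nbhd :: "'a set \<Rightarrow> ('a \<Rightarrow> 'a \<Rightarrow> bool) \<Rightarrow> 'a \<Rightarrow> 'a set" where
  "closed_nbhd V E v = insert v {w \<in> V. E v w}"

definition is_DNS :: "'a set \<Rightarrow> ('a \<Rightarrow> 'a \<Rightarrow> bool) \<Rightarrow> 'a list \<Rightarrow> bool" where
  "is_DNS V E vs \<longleftrightarrow> distinct vs \<and> set vs \<subseteq> V \<and>
     (\<forall>i < length vs. \<exists>w \<in> closed_nbhd V E (vs ! i).
        card {j. j < i \<and> w \<in> closed_nbhd V E (vs ! j)} \<le> 1)"

definition is_MDNS :: "'a set \<Rightarrow> ('a \<Rightarrow> 'a \<Rightarrow> bool) \<Rightarrow> 'a list \<Rightarrow> bool" where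
  "is_MDNS V E vs \<longleftrightarrow> is_DNS V E vs \<and> (\<forall>ws. is_DNS V E ws \<longrightarrow> length ws \<le> length vs)"

definition gamma_gr2 :: "'a set \<Rightarrow> ('a \<Rightarrow> 'a \<Rightarrow> bool) \<Rightarrow> nat" where
  "gamma_gr2 V E = Max {length vs | vs. is_DNS V E vs}"

text \<open>Spider graphs (S, C, empty head) of weight r: vertices s_1..s_r, c_1..c_r.\<close>
datatype spv = Sv nat | Cv nat

definition spider_V :: "nat \<Rightarrow> spv set" where
  "spider_V r = Sv ` {1..r} \<union> Cv ` {1..r}"

fun thin_E :: "spv \<Rightarrow> spv \<Rightarrow> bool" where
  "thin_E (Cv i) (Cv j) = (i \<noteq> j)"
| "thin_E (Sv i) (Cv j) = (i = j)"
| "thin_E (Cv j) (Sv i) = (i = j)"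
| "thin_E (Sv i) (Sv j) = False"

fun thick_E :: "spv \<Rightarrow> spv \<Rightarrow> bool" where
  "thick_E (Cv i) (Cv j) = (i \<noteq> j)"
| "thick_E (Sv i) (Cv j) = (i \<noteq> j)"
| "thick_E (Cv j) (Sv i) = (i \<noteq> j)"
| "thick_E (Sv i) (Sv j) = False"

end

theory Submission
  imports Defs
begin


declare upt_Suc[simp del]

lemma nb: "x \<in> closed_nbhd V E y \<longleftrightarrow> x = y \<or> (x \<in> V \<and> E y x)"
  unfolding closed_nbhd_def by auto

lemma dns_nth:
  assumes "is_DNS V E vs" "i < length vs"
  shows "\<exists>w\<in>closed_nbhd V E (vs!i). \<forall>j1 j2. j1<i \<longrightarrow> j2<i \<longrightarrow>
     w \<in> closed_nbhd V E (vs!j1) \<longrightarrow> w \<in> closed_nbhd V E (vs!j2) \<longrightarrow> j1=j2"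
proof -
  obtain w where w: "w \<in> closed_nbhd V E (vs!i)"
    "card {j. j < i \<and> w \<in> closed_nbhd V E (vs ! j)} \<le> 1"
    using assms unfolding is_DNS_def by blast
  have f: "finite {j. j < i \<and> w \<in> closed_nbhd V E (vs ! j)}" by simp
  show ?thesis using w card_le_Suc0_iff_eq[OF f] by (intro bexI[of _ w]) auto
qed

lemma card_le1: "S \<subseteq> {k} \<Longrightarrow> card S \<le> 1"
  by (metis card.empty card.insert empty_iff finite.intros(1) le_numeral_extra(4) subset_singletonD zero_le_one One_nat_def)

lemma card_V: "card (spider_V r) = 2 * r"
proof -
  have "card (spider_V r) = card (Sv ` {1..r}) + card (Cv ` {1..r})"
    unfolding spider_V_def by (rule card_Un_disjoint) auto
  also have "\<dots> = 2 * r" by (simp add: card_image inj_on_def)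
  finally show ?thesis .
qed

lemma len_le_V: "is_DNS V E vs \<Longrightarrow> finite V \<Longrightarrow> length vs \<le> card V"
  unfolding is_DNS_def by (metis card_mono distinct_card)

lemma thin_DNS:
  "is_DNS (spider_V r) thin_E (map Cv [1..<r+1] @ map Sv [1..<r+1])"
proof -
  let ?vs = "map Cv [1..<r+1] @ map Sv [1..<r+1]"
  have nth1: "?vs ! i = Cv (i+1)" if "i < r" for i using that by (simp add: nth_append del: upt_Suc)
  have nth2: "?vs ! i = Sv (i-r+1)" if "r \<le> i" "i < 2*r" for i using that by (simp add: nth_append del: upt_Suc)
  show ?thesis unfolding is_DNS_def
  proof (intro conjI allI impI)
    show "distinct ?vs" by (auto simp: distinct_map inj_on_def)
    show "set ?vs \<subseteq> spider_V r" by (auto simp: spider_V_def)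
  next
    fix i assume i: "i < length ?vs"
    show "\<exists>w \<in> closed_nbhd (spider_V r) thin_E (?vs ! i).
        card {j. j < i \<and> w \<in> closed_nbhd (spider_V r) thin_E (?vs ! j)} \<le> 1"
    proof (cases "i < r")
      case True
      have e: "{j. j < i \<and> Sv (i+1) \<in> closed_nbhd (spider_V r) thin_E (?vs ! j)} = {}"
        using True by (auto simp: nb nth1[simplified])
      have m: "Sv (i+1) \<in> closed_nbhd (spider_V r) thin_E (?vs ! i)"
        using True by (auto simp: nb nth1[simplified] spider_V_def)
      show ?thesis by (rule bexI[of _ "Sv (i+1)"], subst e, simp, rule m)
    next
      case False
      have "{j. j < i \<and> Sv (i-r+1) \<in> closed_nbhd (spider_V r) thin_E (?vs ! j)} \<subseteq> {i-r}"
      proof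
        fix j assume j: "j \<in> {j. j < i \<and> Sv (i-r+1) \<in> closed_nbhd (spider_V r) thin_E (?vs ! j)}"
        show "j \<in> {i-r}"
        proof (cases "j < r")
          case True then show ?thesis using j by (auto simp: nb nth1[simplified])
        next
          case False then show ?thesis using j i \<open>\<not> i < r\<close> by (auto simp: nb nth2[simplified])
        qed
      qed
      moreover have "Sv (i-r+1) \<in> closed_nbhd (spider_V r) thin_E (?vs ! i)"
        using False i by (auto simp: nb nth2[simplified])
      ultimately show ?thesis by (blast intro: card_le1)
    qed
  qed
qed

lemma thick_DNS:
  assumes "r \<ge> 2"
  shows "is_DNS (spider_V r) thick_E (map Sv [1..<r+1] @ [Cv 1, Cv 2])"
proof -
  let ?vs = "map Sv [1..<r+1] @ [Cv 1, Cv 2]"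
  have nth1: "?vs ! i = Sv (i+1)" if "i < r" for i using that by (simp add: nth_append del: upt_Suc)
  have nth2: "?vs ! r = Cv 1" "?vs ! (Suc r) = Cv 2" by (simp_all add: nth_append del: upt_Suc)
  show ?thesis unfolding is_DNS_def
  proof (intro conjI allI impI)
    show "distinct ?vs" by (auto simp: distinct_map inj_on_def)
    show "set ?vs \<subseteq> spider_V r" using assms by (auto simp: spider_V_def)
  next
    fix i assume i: "i < length ?vs"
    show "\<exists>w \<in> closed_nbhd (spider_V r) thick_E (?vs ! i).
        card {j. j < i \<and> w \<in> closed_nbhd (spider_V r) thick_E (?vs ! j)} \<le> 1"
    proof (cases "i < r")
      case True
      have e: "{j. j < i \<and> Sv (i+1) \<in> closed_nbhd (spider_V r) thick_E (?vs ! j)} = {}"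
        using True by (auto simp: nb nth1[simplified])
      have m: "Sv (i+1) \<in> closed_nbhd (spider_V r) thick_E (?vs ! i)"
        using True by (auto simp: nb nth1[simplified] spider_V_def)
      show ?thesis by (rule bexI[of _ "Sv (i+1)"], subst e, simp, rule m)
    next
      case False
      then consider "i = r" | "i = Suc r" using i by fastforce
      then show ?thesis
      proof cases
        case 1
        have "{j. j < i \<and> Sv 2 \<in> closed_nbhd (spider_V r) thick_E (?vs ! j)} \<subseteq> {1}"
          using 1 by (auto simp: nb nth1[simplified])
        moreover have "Sv 2 \<in> closed_nbhd (spider_V r) thick_E (?vs ! i)"
          using 1 assms by (auto simp: nb nth2[simplified] spider_V_def)
        ultimately show ?thesis by (blast intro: card_le1)
      next
        case 2
        have "{j. j < i \<and> Sv 1 \<in> closed_nbhd (spider_V r) thick_E (?vs ! j)} \<subseteq> {0}"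
        proof
          fix j assume j: "j \<in> {j. j < i \<and> Sv 1 \<in> closed_nbhd (spider_V r) thick_E (?vs ! j)}"
          then have "j < r \<or> j = r" using 2 by auto
          then show "j \<in> {0}" using j nth2[simplified] by (auto simp: nb nth1[simplified])
        qed
        moreover have "Sv 1 \<in> closed_nbhd (spider_V r) thick_E (?vs ! i)"
          using 2 assms by (auto simp: nb nth2[simplified] spider_V_def)
        ultimately show ?thesis by (blast intro: card_le1)
      qed
    qed
  qed
qed



lemma sorted_enum:
  fixes I :: "nat set"
  assumes "finite I"
  obtains L where "set L = I" "length L = card I" "\<And>i j. i < j \<Longrightarrow> j < length L \<Longrightarrow> L!i < L!j"
proof
  let ?L = "sorted_list_of_set I"
  show "set ?L = I" "length ?L = card I" using assms by auto
  show "\<And>i j. i < j \<Longrightarrow> j < length ?L \<Longrightarrow> ?L!i < ?L!j"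
    using sorted_wrt_nth_less[OF strict_sorted_list_of_set[of I]] by blast
qed

lemma thick_bound:
  assumes D: "is_DNS (spider_V r) thick_E vs"
  shows "length vs \<le> r + 2"
proof -
  let ?V = "spider_V r"
  let ?N = "closed_nbhd ?V thick_E"
  have dist: "distinct vs" and sub: "set vs \<subseteq> ?V" using D by (auto simp: is_DNS_def)
  have inV: "vs!i \<in> ?V" if "i < length vs" for i using sub that by auto
  have NV: "w \<in> ?V" if "x \<in> ?V" "w \<in> ?N x" for x w using that by (auto simp: nb)
  have NC: "Cv k \<in> ?N x \<longleftrightarrow> x \<noteq> Sv k" if "x \<in> ?V" "Cv k \<in> ?V" for x k
    using that by (cases x) (auto simp: nb)
  have NSC: "Sv m \<in> ?N (Cv j) \<longleftrightarrow> j \<noteq> m" if "Sv m \<in> ?V" for m j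
    using that by (auto simp: nb)
  have NSS: "Sv m \<in> ?N (Sv j) \<longleftrightarrow> j = m" for m j
    by (auto simp: nb)
  have foot: "\<exists>w\<in>?N (vs!i). \<forall>j1 j2. j1<i \<longrightarrow> j2<i \<longrightarrow>
     w \<in> ?N (vs!j1) \<longrightarrow> w \<in> ?N (vs!j2) \<longrightarrow> j1=j2" if "i < length vs" for i
    using dns_nth[OF D that] .
  have Vcases: "(\<exists>k. x = Cv k) \<or> (\<exists>k. x = Sv k)" for x by (cases x) auto
  define I where "I = {i. i < length vs \<and> (\<exists>k. vs!i = Cv k)}"
  have finI: "finite I" unfolding I_def by simp
  have nd: "vs!i \<noteq> vs!j" if "i < length vs" "j < length vs" "i \<noteq> j" for i j
    using dist that nth_eq_iff_index_eq by blast
  have three: False if p: "p1 \<in> I" "p2 \<in> I" "p3 \<in> I" "p1 < p2" "p2 < p3" "p3 < q" "q < length vs"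
    for p1 p2 p3 q
  proof -
    obtain a b c where abc: "vs!p1 = Cv a" "vs!p2 = Cv b" "vs!p3 = Cv c"
      using p unfolding I_def by auto
    have lens: "p1 < length vs" "p2 < length vs" "p3 < length vs" using p by auto
    have d: "a \<noteq> b" "a \<noteq> c" "b \<noteq> c" using nd[of p1 p2] nd[of p1 p3] nd[of p2 p3] lens p abc by auto
    have pV: "Cv a \<in> ?V" "Cv b \<in> ?V" "Cv c \<in> ?V" using inV lens abc by metis+
    obtain w where w: "w \<in> ?N (vs!q)" and wu: "\<forall>j1 j2. j1<q \<longrightarrow> j2<q \<longrightarrow>
     w \<in> ?N (vs!j1) \<longrightarrow> w \<in> ?N (vs!j2) \<longrightarrow> j1=j2" using foot[OF p(7)] by blast
    have wV: "w \<in> ?V" using NV[OF inV[OF p(7)] w] .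
    consider k where "w = Cv k" | m where "w = Sv m" using Vcases by blast
    then show False
    proof cases
      case 1
      then have "w \<in> ?N (vs!p1)" "w \<in> ?N (vs!p2)" using NC wV pV abc by auto
      moreover have "p1 < q" "p2 < q" using p by auto
      ultimately show False using wu p(4) by (metis less_irrefl)
    next
      case 2
      have c1: "w \<in> ?N (vs!p1) \<longleftrightarrow> a \<noteq> m" "w \<in> ?N (vs!p2) \<longleftrightarrow> b \<noteq> m"
        "w \<in> ?N (vs!p3) \<longleftrightarrow> c \<noteq> m"
        using NSC[of m] wV 2 abc by auto
      have lt: "p1 < q" "p2 < q" "p3 < q" using p by auto
      show False
      proof (cases "a = m")
        case True then have "b \<noteq> m" "c \<noteq> m" using d by auto
        then show False using wu[rule_format, of p2 p3] c1 lt p by auto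
      next
        case False
        show False
        proof (cases "b = m")
          case True then have "c \<noteq> m" using d by auto
          then show False using wu[rule_format, of p1 p3] c1 lt p \<open>a \<noteq> m\<close> by auto
        next
          case False
          then show False using wu[rule_format, of p1 p2] c1 lt p \<open>a \<noteq> m\<close> by auto
        qed
      qed
    qed
  qed
  have cardI: "card I \<le> 3"
  proof (rule ccontr)
    assume "\<not> card I \<le> 3"
    obtain L where L: "set L = I" "length L = card I" "\<And>i j. i < j \<Longrightarrow> j < length L \<Longrightarrow> L!i < L!j"
      using sorted_enum[OF finI] by blast
    have l4: "3 < length L" using L \<open>\<not> card I \<le> 3\<close> by simp
    have ne: "L \<noteq> []" using L(2) \<open>\<not> card I \<le> 3\<close> by auto
    have Lm: "\<And>i. i < length L \<Longrightarrow> L!i \<in> I" using L(1) nth_mem by blast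
    have "L!0 \<in> I" "L!1 \<in> I" "L!2 \<in> I" "L!3 \<in> I" using Lm[of 0] Lm[of 1] Lm[of 2] Lm[of 3] l4 ne by (simp_all add: numeral_eq_Suc)
    moreover have "L!0 < L!1" "L!1 < L!2" "L!2 < L!3" using L(3) l4 by auto
    moreover have "L!3 < length vs" using \<open>L!3 \<in> I\<close> unfolding I_def by auto
    ultimately show False using three by blast
  qed
  have setsub: "set vs \<subseteq> Sv ` {1..r} \<union> (\<lambda>i. vs!i) ` I"
  proof
    fix x assume x: "x \<in> set vs"
    then obtain i where i: "i < length vs" "vs!i = x" by (auto simp: in_set_conv_nth)
    show "x \<in> Sv ` {1..r} \<union> (\<lambda>i. vs!i) ` I"
    proof (cases "\<exists>k. x = Cv k")
      case True then show ?thesis using i unfolding I_def by auto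
    next
      case False then show ?thesis using x sub Vcases unfolding spider_V_def by blast
    qed
  qed
  have len: "length vs = card (set vs)" using dist by (simp add: distinct_card)
  show ?thesis
  proof (cases "card I \<le> 2")
    case True
    have "card (set vs) \<le> card (Sv ` {1..r}) + card ((\<lambda>i. vs!i) ` I)"
      by (rule order.trans[OF card_mono[OF _ setsub] card_Un_le]) (simp add: finI)
    also have "\<dots> \<le> r + card I" by (simp add: card_image_le[OF finI] card_image inj_on_def)
    finally show ?thesis using len True by simp
  next
    case False
    then have c3: "card I = 3" using cardI by simp
    obtain L where L: "set L = I" "length L = card I" "\<And>i j. i < j \<Longrightarrow> j < length L \<Longrightarrow> L!i < L!j"
      using sorted_enum[OF finI] by blast
    have l3: "length L = 3" using L c3 by simp
    define p1 where "p1 = L!0"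
    define p2 where "p2 = L!1"
    define p3 where "p3 = L!2"
    have ne: "L \<noteq> []" using L(2) c3 by auto
    have Lm: "\<And>i. i < length L \<Longrightarrow> L!i \<in> I" using L(1) nth_mem by blast
    have pI: "p1 \<in> I" "p2 \<in> I" "p3 \<in> I" unfolding p1_def p2_def p3_def using Lm[of 0] Lm[of 1] Lm[of 2] l3 ne by (simp_all add: numeral_eq_Suc)
    have pl: "p1 < p2" "p2 < p3" unfolding p1_def p2_def p3_def using L(3) l3 by auto
    obtain x y z where Lxyz: "L = [x, y, z]" using l3
      by (auto simp: numeral_eq_Suc length_Suc_conv)
    have Ieq: "I = {p1, p2, p3}" unfolding p1_def p2_def p3_def using L(1) Lxyz by auto
    obtain a b c where abc: "vs!p1 = Cv a" "vs!p2 = Cv b" "vs!p3 = Cv c"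
      using pI unfolding I_def by auto
    have lens: "p1 < length vs" "p2 < length vs" "p3 < length vs" using pI unfolding I_def by auto
    have d: "a \<noteq> b" using nd[of p1 p2] lens pl abc by auto
    have pV: "Cv a \<in> ?V" "Cv b \<in> ?V" "Cv c \<in> ?V" using inV lens abc by metis+
    obtain w where w: "w \<in> ?N (vs!p3)" and wu: "\<forall>j1 j2. j1<p3 \<longrightarrow> j2<p3 \<longrightarrow>
     w \<in> ?N (vs!j1) \<longrightarrow> w \<in> ?N (vs!j2) \<longrightarrow> j1=j2" using foot[OF lens(3)] by blast
    have wV: "w \<in> ?V" using NV[OF inV[OF lens(3)] w] .
    have "\<not> (\<exists>k. w = Cv k)"
    proof
      assume "\<exists>k. w = Cv k"
      then have "w \<in> ?N (vs!p1)" "w \<in> ?N (vs!p2)" using NC wV pV abc by auto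
      then show False using wu[rule_format, of p1 p2] pl by auto
    qed
    then obtain m where wm: "w = Sv m" using Vcases by blast
    have mr: "m \<in> {1..r}" using wV wm unfolding spider_V_def by auto
    have notin: "Sv m \<notin> set vs"
    proof
      assume "Sv m \<in> set vs"
      then obtain q where q: "q < length vs" "vs!q = Sv m" by (auto simp: in_set_conv_nth)
      have "q \<noteq> p1" "q \<noteq> p2" "q \<noteq> p3" using q abc by auto
      show False
      proof (cases "q < p3")
        case True
        have c1: "w \<in> ?N (vs!p1) \<longleftrightarrow> a \<noteq> m" "w \<in> ?N (vs!p2) \<longleftrightarrow> b \<noteq> m"
          using NSC[of m] wV wm abc by auto
        have "w \<in> ?N (vs!q)" using q wm NSS by auto
        show False
        proof (cases "a = m")
          case True then have "b \<noteq> m" using d by auto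
          then show False using wu[rule_format, of p2 q] c1 \<open>q < p3\<close> pl \<open>q \<noteq> p2\<close> \<open>w \<in> ?N (vs!q)\<close> by auto
        next
          case False
          then show False using wu[rule_format, of p1 q] c1 \<open>q < p3\<close> pl \<open>q \<noteq> p1\<close> \<open>w \<in> ?N (vs!q)\<close> by auto
        qed
      next
        case False
        then have "p3 < q" using \<open>q \<noteq> p3\<close> by simp
        then show False using three[OF pI pl _ q(1)] by blast
      qed
    qed
    have setsub2: "set vs \<subseteq> Sv ` ({1..r} - {m}) \<union> (\<lambda>i. vs!i) ` I"
      using setsub notin by auto
    have "card (set vs) \<le> card (Sv ` ({1..r} - {m})) + card ((\<lambda>i. vs!i) ` I)"
      by (rule order.trans[OF card_mono[OF _ setsub2] card_Un_le]) (simp add: finI)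
    also have "\<dots> \<le> (r - 1) + card I"
      using mr card_image_le[OF finI, of "\<lambda>i. vs!i"] by (simp add: card_image inj_on_def)
    finally show ?thesis using len c3 mr by simp
  qed
qed


theorem lemma5:
  fixes r :: nat
  shows "(r \<ge> 2 \<longrightarrow>
            gamma_gr2 (spider_V r) thin_E = 2 * r \<and>
            is_MDNS (spider_V r) thin_E (map Cv [1..<r+1] @ map Sv [1..<r+1]))
       \<and> (r \<ge> 3 \<longrightarrow>
            gamma_gr2 (spider_V r) thick_E = r + 2 \<and>
            is_MDNS (spider_V r) thick_E (map Sv [1..<r+1] @ [Cv 1, Cv 2]))"
proof (intro conjI impI)
  have finV: "finite (spider_V r)" unfolding spider_V_def by simp
  have M1: "is_MDNS (spider_V r) thin_E (map Cv [1..<r+1] @ map Sv [1..<r+1])"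
    unfolding is_MDNS_def using thin_DNS len_le_V[OF _ finV] card_V by (simp add: mult_2)
  then show "is_MDNS (spider_V r) thin_E (map Cv [1..<r+1] @ map Sv [1..<r+1])" .
  show "gamma_gr2 (spider_V r) thin_E = 2 * r"
    unfolding gamma_gr2_def
  proof (rule Max_eqI)
    show "finite {length vs |vs. is_DNS (spider_V r) thin_E vs}"
      by (rule finite_subset[of _ "{..2*r}"]) (auto dest: len_le_V[OF _ finV] simp: card_V)
    show "y \<le> 2 * r" if "y \<in> {length vs |vs. is_DNS (spider_V r) thin_E vs}" for y
      using that len_le_V[OF _ finV] card_V by auto
    show "2 * r \<in> {length vs |vs. is_DNS (spider_V r) thin_E vs}"
      using thin_DNS[of r] by (intro CollectI exI[of _ "map Cv [1..<r+1] @ map Sv [1..<r+1]"]) simp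
  qed
next
  assume r3: "3 \<le> r"
  show M2: "is_MDNS (spider_V r) thick_E (map Sv [1..<r+1] @ [Cv 1, Cv 2])"
    unfolding is_MDNS_def using thick_DNS[of r] r3 thick_bound by simp
  show "gamma_gr2 (spider_V r) thick_E = r + 2"
    unfolding gamma_gr2_def
  proof (rule Max_eqI)
    show "finite {length vs |vs. is_DNS (spider_V r) thick_E vs}"
      by (rule finite_subset[of _ "{..r+2}"]) (auto dest: thick_bound)
    show "y \<le> r + 2" if "y \<in> {length vs |vs. is_DNS (spider_V r) thick_E vs}" for y
      using that thick_bound by auto
    show "r + 2 \<in> {length vs |vs. is_DNS (spider_V r) thick_E vs}"
      using thick_DNS[of r] r3 by (intro CollectI exI[of _ "map Sv [1..<r+1] @ [Cv 1, Cv 2]"]) simp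
  qed
qed


end
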